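(* Let $d>3$, and consider Jackson networks with $d$ queues and routing matrix $p_{ij}=p\in(0,1/(d-1))$ for all $i\ne j$ (and $p_{ii}=0$), satisfying: $\lambda_1+\dots+\lambda_d=1$ with $0=\lambda_1<\lambda_i$ for all $i\in\{2,\dots,d\}$; and $\sqrt{\mu_i}-\sqrt{\nu_i}=t>0$ for all $i\in\{1,\dots,d\}$, where $\nu$ is the solution of the traffic equations; assume also hypotheses (A) and (B). Then for every $p>0$ small enough there is $t_p>0$ such that for every $t>t_p$ the equality $$\sup_{\gamma\in\Gamma}\min_{1\le i\le d}\gamma_i\Bigl(\frac{\mu_i}{1+\gamma_i}-\nu_i\Bigr)=\min_{1\le i\le d}\bigl(\sqrt{\mu_i}-\sqrt{\nu_i}\bigr)^2$$ fails to hold.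
   Context: Jackson network with $d$ queues: arrival rates $\lambda_i\ge0$, service rates $\mu_i>0$, routing matrix $P=(p_{ij})_{i,j=1}^d$ nonnegative with $p_{ii}=0$, $\sum_jp_{ij}\le1$, $p_{i0}=1-\sum_jp_{ij}$. Hypothesis (A): the jump-rate kernel on $\mathbb{Z}^d$ (jumps $+\epsilon^i$ at rate $\lambda_i$, $-\epsilon^i$ at rate $\mu_ip_{i0}$, $\epsilon^j-\epsilon^i$ at rate $\mu_ip_{ij}$) is irreducible (equivalently spectral radius of $P$ $<1$ and for every $i$ some $\lambda_jp^{(n)}_{ji}>0$); the traffic equations $\nu_j=\lambda_j+\sum_i\nu_ip_{ij}$ (which depend only on $\lambda$ and $P$) have a unique solution with $\nu_i>0$. Hypothesis (B): $\nu_i<\mu_i$ for all $i$. $Q_{ij}$: probability that the chain on $\{0,\dots,d\}$ with transitions $p_{ij}$ ($0$ absorbing) started at $i$ ever visits $j$ (time $0$ included). For $\gamma\in\mathbb{R}_+^d$, $\overrightarrow{\gamma_i}$ has components $\gamma_i^j=\log(1+Q_{ji}\gamma_i)$; $\Gamma$ is the set of $\gamma\in\mathbb{R}_+^d$ such that for every $i$ and nonzero $v\in\mathbb{R}_+^d$ with $v^i=0$, $\overrightarrow{\gamma_i}\cdot v<\max_j\overrightarrow{\gamma_j}\cdot v$. *)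

theory Defs
  imports Complex_Main "HOL-Library.Extended_Real"
begin

text \<open>Queues are indexed by 1..d. Routing matrix P :: nat => nat => real,
  arrival rates lam, service rates mu, all indexed by nat (values outside 1..d irrelevant).\<close>

definition p_out :: "nat \<Rightarrow> (nat \<Rightarrow> nat \<Rightarrow> real) \<Rightarrow> nat \<Rightarrow> real" where
  "p_out d P i = 1 - (\<Sum>j\<in>{1..d}. P i j)"

definition unit_int :: "nat \<Rightarrow> nat \<Rightarrow> int" where
  "unit_int i = (\<lambda>k. if k = i then 1 else 0)"

definition jumps :: "nat \<Rightarrow> (nat \<Rightarrow> real) \<Rightarrow> (nat \<Rightarrow> real) \<Rightarrow> (nat \<Rightarrow> nat \<Rightarrow> real) \<Rightarrow> (nat \<Rightarrow> int) set" where
  "jumps d lam mu P =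
     {unit_int i | i. i \<in> {1..d} \<and> lam i > 0}
   \<union> {(\<lambda>k. - unit_int i k) | i. i \<in> {1..d} \<and> mu i * p_out d P i > 0}
   \<union> {(\<lambda>k. unit_int j k - unit_int i k) | i j. i \<in> {1..d} \<and> j \<in> {1..d} \<and> mu i * P i j > 0}"

definition lattice_Zd :: "nat \<Rightarrow> (nat \<Rightarrow> int) set" where
  "lattice_Zd d = {x. \<forall>k. k \<notin> {1..d} \<longrightarrow> x k = 0}"

definition jump_rel :: "nat \<Rightarrow> (nat \<Rightarrow> real) \<Rightarrow> (nat \<Rightarrow> real) \<Rightarrow> (nat \<Rightarrow> nat \<Rightarrow> real) \<Rightarrow> ((nat \<Rightarrow> int) \<times> (nat \<Rightarrow> int)) set" where
  "jump_rel d lam mu P = {(x, \<lambda>k. x k + v k) | x v. v \<in> jumps d lam mu P}"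

definition kernel_irreducible :: "nat \<Rightarrow> (nat \<Rightarrow> real) \<Rightarrow> (nat \<Rightarrow> real) \<Rightarrow> (nat \<Rightarrow> nat \<Rightarrow> real) \<Rightarrow> bool" where
  "kernel_irreducible d lam mu P =
     (\<forall>x\<in>lattice_Zd d. \<forall>y\<in>lattice_Zd d. (x, y) \<in> (jump_rel d lam mu P)\<^sup>*)"

definition traffic_sol :: "nat \<Rightarrow> (nat \<Rightarrow> real) \<Rightarrow> (nat \<Rightarrow> nat \<Rightarrow> real) \<Rightarrow> (nat \<Rightarrow> real) \<Rightarrow> bool" where
  "traffic_sol d lam P nu = (\<forall>j\<in>{1..d}. nu j = lam j + (\<Sum>i\<in>{1..d}. nu i * P i j))"

definition hypA :: "nat \<Rightarrow> (nat \<Rightarrow> real) \<Rightarrow> (nat \<Rightarrow> real) \<Rightarrow> (nat \<Rightarrow> nat \<Rightarrow> real) \<Rightarrow> bool" where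
  "hypA d lam mu P =
     (kernel_irreducible d lam mu P \<and>
      (\<exists>nu. traffic_sol d lam P nu \<and> (\<forall>i\<in>{1..d}. nu i > 0) \<and>
            (\<forall>nu'. traffic_sol d lam P nu' \<longrightarrow> (\<forall>i\<in>{1..d}. nu' i = nu i))))"

definition hypB :: "nat \<Rightarrow> (nat \<Rightarrow> real) \<Rightarrow> (nat \<Rightarrow> real) \<Rightarrow> bool" where
  "hypB d nu mu = (\<forall>i\<in>{1..d}. nu i < mu i)"

text \<open>first_visit d P j n i: probability that the chain on {0,...,d} (0 absorbing,
  transitions P) started at i is at j for the first time at time n.\<close>
fun first_visit :: "nat \<Rightarrow> (nat \<Rightarrow> nat \<Rightarrow> real) \<Rightarrow> nat \<Rightarrow> nat \<Rightarrow> nat \<Rightarrow> real" where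
  "first_visit d P j 0 i = (if i = j then 1 else 0)"
| "first_visit d P j (Suc n) i =
     (if i = j then 0 else (\<Sum>k\<in>{1..d}. P i k * first_visit d P j n k))"

text \<open>Q_ij: probability to ever visit j starting from i (time 0 included).\<close>
definition Qvisit :: "nat \<Rightarrow> (nat \<Rightarrow> nat \<Rightarrow> real) \<Rightarrow> nat \<Rightarrow> nat \<Rightarrow> real" where
  "Qvisit d P i j = (\<Sum>n. first_visit d P j n i)"

definition gamma_vec :: "nat \<Rightarrow> (nat \<Rightarrow> nat \<Rightarrow> real) \<Rightarrow> (nat \<Rightarrow> real) \<Rightarrow> nat \<Rightarrow> nat \<Rightarrow> real" where
  "gamma_vec d P g i = (\<lambda>j. ln (1 + Qvisit d P j i * g i))"

definition dotd :: "nat \<Rightarrow> (nat \<Rightarrow> real) \<Rightarrow> (nat \<Rightarrow> real) \<Rightarrow> real" where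
  "dotd d u v = (\<Sum>k\<in>{1..d}. u k * v k)"

definition Gamma_set :: "nat \<Rightarrow> (nat \<Rightarrow> nat \<Rightarrow> real) \<Rightarrow> (nat \<Rightarrow> real) set" where
  "Gamma_set d P = {g. (\<forall>i\<in>{1..d}. g i \<ge> 0) \<and> (\<forall>k. k \<notin> {1..d} \<longrightarrow> g k = 0) \<and>
     (\<forall>i\<in>{1..d}. \<forall>v. (\<forall>k\<in>{1..d}. v k \<ge> 0) \<and> (\<exists>k\<in>{1..d}. v k \<noteq> 0) \<and> v i = 0 \<longrightarrow>
        dotd d (gamma_vec d P g i) v < Max ((\<lambda>j. dotd d (gamma_vec d P g j) v) ` {1..d}))}"

definition objective :: "nat \<Rightarrow> (nat \<Rightarrow> real) \<Rightarrow> (nat \<Rightarrow> real) \<Rightarrow> (nat \<Rightarrow> real) \<Rightarrow> real" where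
  "objective d mu nu g = Min ((\<lambda>i. g i * (mu i / (1 + g i) - nu i)) ` {1..d})"

definition routing_unif :: "real \<Rightarrow> nat \<Rightarrow> nat \<Rightarrow> real" where
  "routing_unif p = (\<lambda>i j. if i = j then 0 else p)"

end

theory Submission imports Defs begin

lemma fv_nonneg:
  assumes "p \<ge> 0"
  shows "first_visit d (routing_unif p) j n i \<ge> 0"
proof (induction n arbitrary: i)
  case 0 then show ?case by simp
next
  case (Suc n) then show ?case using assms
    by (auto simp: routing_unif_def intro!: sum_nonneg mult_nonneg_nonneg)
qed

lemma fv_bound:
  assumes "p \<ge> 0"
  shows "first_visit d (routing_unif p) j (Suc n) i \<le> p * (p * real d) ^ n"
proof (induction n arbitrary: i)
  case 0
  have "(\<Sum>k\<in>{1..d}. routing_unif p i k * (if k = j then 1 else 0))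
        = (\<Sum>k\<in>{1..d}. if k = j then routing_unif p i k else 0)"
    by (rule sum.cong) auto
  also have "\<dots> = (if j \<in> {1..d} then routing_unif p i j else 0)"
    by (simp add: sum.delta)
  also have "\<dots> \<le> p" using assms by (auto simp: routing_unif_def)
  finally show ?case using assms by simp
next
  case (Suc n)
  have "(\<Sum>k\<in>{1..d}. routing_unif p i k * first_visit d (routing_unif p) j (Suc n) k)
      \<le> (\<Sum>k\<in>{1..d}. p * (p * (p * real d) ^ n))"
  proof (rule sum_mono)
    fix k assume "k \<in> {1..d}"
    have h1: "0 \<le> routing_unif p i k" "routing_unif p i k \<le> p" using assms by (auto simp: routing_unif_def)
    show "routing_unif p i k * first_visit d (routing_unif p) j (Suc n) k \<le> p * (p * (p * real d) ^ n)"
      by (rule mult_mono) (use h1 Suc fv_nonneg[OF assms] assms in \<open>auto simp del: first_visit.simps\<close>)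
  qed
  also have "\<dots> = p * (p * real d) ^ Suc n" by (simp add: algebra_simps)
  finally show ?case using assms fv_nonneg[OF assms] by (auto intro: order_trans)
qed

lemma fv_summable:
  assumes "p \<ge> 0" "p * real d \<le> 1/2"
  shows "summable (\<lambda>n. first_visit d (routing_unif p) j n i)"
    and "summable (\<lambda>n. first_visit d (routing_unif p) j (Suc n) i)"
    and "(\<Sum>n. first_visit d (routing_unif p) j (Suc n) i) \<le> 2 * p"
proof -
  have g: "summable (\<lambda>n. p * (p * real d) ^ n)"
    using assms by (intro summable_mult summable_geometric) auto
  show s: "summable (\<lambda>n. first_visit d (routing_unif p) j (Suc n) i)"
    by (rule summable_comparison_test[OF _ g]) (use fv_nonneg[OF assms(1)] fv_bound[OF assms(1)] in \<open>auto simp del: first_visit.simps\<close>)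
  then show "summable (\<lambda>n. first_visit d (routing_unif p) j n i)"
    using summable_Suc_iff by blast
  have "(\<Sum>n. first_visit d (routing_unif p) j (Suc n) i) \<le> (\<Sum>n. p * (p * real d) ^ n)"
    by (rule suminf_le[OF _ s g]) (use fv_bound[OF assms(1)] in \<open>auto simp del: first_visit.simps\<close>)
  also have "\<dots> = p * (1 / (1 - p * real d))"
    using assms by (subst suminf_mult) (auto simp: suminf_geometric)
  also have "\<dots> \<le> 2 * p"
  proof -
    have "1 / (1 - p * real d) \<le> 2" using assms by (simp add: field_simps)
    then have "p * (1 / (1 - p * real d)) \<le> p * 2" using assms by (intro mult_left_mono) auto
    then show ?thesis by simp
  qed
  finally show "(\<Sum>n. first_visit d (routing_unif p) j (Suc n) i) \<le> 2 * p" .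
qed

lemma Q_diag: "Qvisit d (routing_unif p) j j = 1"
proof -
  have "(\<lambda>n. first_visit d (routing_unif p) j n j) = (\<lambda>n. if n = 0 then 1 else 0)"
  proof
    fix n show "first_visit d (routing_unif p) j n j = (if n = 0 then 1 else 0)" by (cases n) auto
  qed
  then show ?thesis unfolding Qvisit_def using sums_single[of 0 "\<lambda>_. 1::real"] sums_unique by fastforce
qed

lemma Q_off:
  assumes "p \<ge> 0" "p * real d \<le> 1/2" "i \<noteq> j"
  shows "Qvisit d (routing_unif p) i j \<le> 2 * p" "Qvisit d (routing_unif p) i j \<ge> 0"
    and "j \<in> {1..d} \<Longrightarrow> Qvisit d (routing_unif p) i j \<ge> p"
proof -
  note s = fv_summable[OF assms(1,2), of j i]
  have eq: "Qvisit d (routing_unif p) i j = (\<Sum>n. first_visit d (routing_unif p) j (Suc n) i)"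
    unfolding Qvisit_def using suminf_split_head[OF s(1)] assms(3) by simp
  show "Qvisit d (routing_unif p) i j \<le> 2 * p" using eq s(3) by simp
  show "Qvisit d (routing_unif p) i j \<ge> 0" unfolding eq
    by (rule suminf_nonneg[OF s(2)]) (use fv_nonneg[OF assms(1)] in \<open>auto simp del: first_visit.simps\<close>)
  assume j: "j \<in> {1..d}"
  have "first_visit d (routing_unif p) j (Suc 0) i = p"
  proof -
    have "(\<Sum>k\<in>{1..d}. routing_unif p i k * (if k = j then 1 else 0))
        = (\<Sum>k\<in>{1..d}. if k = j then routing_unif p i k else 0)"
      by (rule sum.cong) auto
    also have "\<dots> = routing_unif p i j" using j by (simp add: sum.delta)
    finally show ?thesis using assms(3) by (simp add: routing_unif_def)
  qed
  moreover have "sum (\<lambda>n. first_visit d (routing_unif p) j (Suc n) i) {0} \<le> (\<Sum>n. first_visit d (routing_unif p) j (Suc n) i)"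
    by (rule sum_le_suminf[OF s(2)]) (use fv_nonneg[OF assms(1)] in \<open>auto simp del: first_visit.simps\<close>)
  ultimately show "Qvisit d (routing_unif p) i j \<ge> p" using eq by simp
qed


lemma low_bound:
  fixes s t g :: real
  assumes "s > 0" "t > 0" "g \<ge> 0" "g * ((t+s)^2/(1+g) - s^2) > t^2 - s^2"
  shows "g > (t-s)/(2*s)"
proof -
  have "g * (t+s)^2/(1+g) > t^2 - s^2" using assms(3,4)
    by (smt (verit, ccfv_SIG) mult_nonneg_nonneg right_diff_distrib times_divide_eq_right zero_le_power2)
  then have "g * (t+s)^2 > (t^2 - s^2) * (1+g)" using assms(3) by (simp add: field_simps)
  then have "g * (2*s*(s+t)) > (t-s)*(t+s)" by (simp add: algebra_simps power2_eq_square)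
  then have "(t-s)*(s+t) < (g*(2*s))*(s+t)" by (simp add: algebra_simps)
  then have "t - s < g*(2*s)" using assms(1,2) mult_less_cancel_right_pos[of "s+t"] by simp
  then show ?thesis using assms(1) by (simp add: pos_divide_less_eq)
qed

lemma up_bound:
  fixes s t g e :: real
  assumes "s > 0" "t > 0" "g \<ge> 0" "e \<le> s^2" "g * ((t+s)^2/(1+g) - s^2) > t^2 - e"
  shows "g < 2 + 2*t/s"
proof -
  have "g * (t+s)^2/(1+g) \<le> (t+s)^2" using assms(3) by (simp add: field_simps)
  then have "(t+s)^2 - g*s^2 > t^2 - e" using assms(5) by (simp add: algebra_simps)
  then have "g * s^2 < 2*t*s + s^2 + e" by (simp add: algebra_simps power2_eq_square)
  also have "\<dots> \<le> (2 + 2*t/s) * s^2" using assms(1,4) by (simp add: field_simps power2_eq_square)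
  finally show ?thesis using assms(1) by (simp add: mult_less_cancel_right_pos power2_eq_square)
qed

lemma dotd_234:
  assumes "d \<ge> 4"
  shows "dotd d u (\<lambda>k. if k \<in> {2,3,4} then 1 else 0) = u 2 + u 3 + u 4"
proof -
  have "dotd d u (\<lambda>k. if k \<in> {2,3,4} then 1 else 0) = (\<Sum>k\<in>{1..d}. if k \<in> {2,3,4} then u k else 0)"
    unfolding dotd_def by (rule sum.cong) auto
  also have "\<dots> = (\<Sum>k\<in>{1..d} \<inter> {2,3,4}. u k)" by (simp add: sum.inter_restrict)
  also have "{1..d} \<inter> {2,3,4} = {2,3,4::nat}" using assms by auto
  finally show ?thesis by simp
qed


lemma key_ln:
  fixes a b c B C A :: real
  assumes "1 \<le> b" "b \<le> B" "1 \<le> c" "c \<le> C" "A \<le> a" "0 \<le> A" "B*C^2 \<le> A^3"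
  shows "ln b + 2 * ln c \<le> 3 * ln a"
proof -
  have "b * c^2 \<le> B * C^2" using assms by (intro mult_mono power_mono) auto
  also have "\<dots> \<le> A^3" by fact
  also have "\<dots> \<le> a^3" using assms by (intro power_mono) auto
  finally have le: "b * c^2 \<le> a^3" .
  have "1 \<le> c^2" using assms(3) by simp
  then have "1 * 1 \<le> b * c^2" using assms(1) by (intro mult_mono) auto
  then have "1 \<le> a^3" using le by simp
  have "a > 0"
  proof (rule ccontr)
    assume "\<not> a > 0"
    then have "a \<le> 0" by simp
    then have "a * a * a \<le> 0" by (simp add: mult_nonneg_nonpos)
    then show False using \<open>1 \<le> a^3\<close> by (simp add: power3_eq_cube)
  qed
  have "ln b + 2 * ln c = ln (b * c^2)" using assms by (simp add: ln_mult ln_realpow)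
  also have "\<dots> \<le> ln (a^3)" using le assms \<open>a > 0\<close> by (subst ln_le_cancel_iff) auto
  also have "\<dots> = 3 * ln a" using \<open>a > 0\<close> by (simp add: ln_realpow)
  finally show ?thesis .
qed

theorem proposition3p5:
  fixes d :: nat and lam :: "nat \<Rightarrow> real"
  assumes "d > 3"
    and "(\<Sum>i\<in>{1..d}. lam i) = 1"
    and "lam 1 = 0"
    and "\<forall>i\<in>{2..d}. lam i > 0"
  shows "\<exists>p0>0. \<forall>p. 0 < p \<and> p < p0 \<and> p < 1 / (real d - 1) \<longrightarrow>
           (\<exists>tp>0. \<forall>t>tp. \<forall>nu mu.
              traffic_sol d lam (routing_unif p) nu \<and>
              (\<forall>i\<in>{1..d}. mu i > 0 \<and> sqrt (mu i) - sqrt (nu i) = t) \<and>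
              hypA d lam mu (routing_unif p) \<and> hypB d nu mu \<longrightarrow>
              (SUP g\<in>Gamma_set d (routing_unif p). ereal (objective d mu nu g))
                \<noteq> ereal (Min ((\<lambda>i. (sqrt (mu i) - sqrt (nu i))\<^sup>2) ` {1..d})))"
proof -
  define m where "m = Min (lam ` {2..d})"
  have ne2: "{2..d} \<noteq> {}" using assms(1) by auto
  have m_pos: "m > 0" unfolding m_def using assms(4) ne2 by (subst Min_gr_iff) auto
  have m_le: "\<And>j. j\<in>{2..d} \<Longrightarrow> m \<le> lam j" unfolding m_def by auto
  define \<sigma> where "\<sigma> = sqrt (m/2)"
  have sig_pos: "\<sigma> > 0" unfolding \<sigma>_def using m_pos by simp
  define W where "W = 3 + 2/\<sigma>"
  have W_pos: "W > 0"
  proof -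
    have "2/\<sigma> > 0" using sig_pos by simp
    then show ?thesis unfolding W_def by linarith
  qed
  define K where "K = \<sigma>^2 / (4096 * W)"
  have K_pos: "K > 0" unfolding K_def using sig_pos W_pos by simp
  have dpos: "real d > 0" using assms(1) by simp
  show ?thesis
  proof (rule exI[of _ "min (1/(2*real d)) (K^2)"], intro conjI allI impI)
    show "min (1/(2*real d)) (K^2) > 0" using dpos K_pos by simp
    fix p assume hp: "0 < p \<and> p < min (1/(2*real d)) (K^2) \<and> p < 1 / (real d - 1)"
    have p0: "p > 0" using hp by simp
    have pd: "p * real d \<le> 1/2" using hp dpos by (simp add: field_simps)
    have pd1: "p * real d < 1/2" using hp dpos by (simp add: field_simps)
    have d4: "real d \<ge> 4" using assms(1) by simp
    have "p * 4 \<le> p * real d" using d4 p0 by (intro mult_left_mono) auto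
    then have p8: "p \<le> 1/8" using pd by simp
    define q where "q = sqrt p"
    have q_pos: "q > 0" unfolding q_def using p0 by simp
    have pq: "p = q^2" unfolding q_def using p0 by simp
    have qK: "q \<le> K"
    proof -
      have "p \<le> K^2" using hp by simp
      then have "sqrt p \<le> sqrt (K^2)" by (rule real_sqrt_le_mono)
      then show ?thesis unfolding q_def using K_pos by simp
    qed
    show "\<exists>tp>0. \<forall>t>tp. \<forall>nu mu.
              traffic_sol d lam (routing_unif p) nu \<and>
              (\<forall>i\<in>{1..d}. mu i > 0 \<and> sqrt (mu i) - sqrt (nu i) = t) \<and>
              hypA d lam mu (routing_unif p) \<and> hypB d nu mu \<longrightarrow>
              (SUP g\<in>Gamma_set d (routing_unif p). ereal (objective d mu nu g))
                \<noteq> ereal (Min ((\<lambda>i. (sqrt (mu i) - sqrt (nu i))\<^sup>2) ` {1..d}))"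
    proof (rule exI[of _ "1 + \<sigma>/(2*p)"], intro conjI allI impI)
      show "1 + \<sigma>/(2*p) > 0" using sig_pos p0 by (simp add: add_pos_pos)
      fix t nu mu
      assume ht: "1 + \<sigma>/(2*p) < t"
      assume H: "traffic_sol d lam (routing_unif p) nu \<and>
              (\<forall>i\<in>{1..d}. mu i > 0 \<and> sqrt (mu i) - sqrt (nu i) = t) \<and>
              hypA d lam mu (routing_unif p) \<and> hypB d nu mu"
      have "\<sigma>/(2*p) > 0" using sig_pos p0 by simp
      then have t1: "t \<ge> 1" using ht by simp
      have t_pos: "t > 0" using t1 by simp
      have tsig: "4*p*t \<ge> 2*\<sigma>" using ht p0 by (simp add: field_simps)
      define S where "S = (\<Sum>i\<in>{1..d}. nu i)"
      have inner: "(\<Sum>i\<in>{1..d}. nu i * routing_unif p i j) = p * (S - nu j)" if "j \<in> {1..d}" for j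
      proof -
        have "(\<Sum>i\<in>{1..d}. nu i * routing_unif p i j) = (\<Sum>i\<in>{1..d}. p * nu i - (if i = j then p * nu i else 0))"
          by (rule sum.cong) (auto simp: routing_unif_def)
        also have "\<dots> = p * S - p * nu j" using that
          by (simp add: sum_subtractf sum_distrib_left S_def sum.delta)
        finally show ?thesis by (simp add: algebra_simps)
      qed
      have tr: "nu j = lam j + p * (S - nu j)" if "j \<in> {1..d}" for j
        using H inner[OF that] that unfolding traffic_sol_def by auto
      have "S = (\<Sum>j\<in>{1..d}. lam j + p * (S - nu j))" unfolding S_def
        by (rule sum.cong) (use tr S_def in auto)
      also have "\<dots> = (\<Sum>j\<in>{1..d}. lam j) + p * ((\<Sum>j\<in>{1..d}. S) - (\<Sum>j\<in>{1..d}. nu j))"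
        by (simp only: sum.distrib sum_subtractf sum_distrib_left[symmetric])
      also have "\<dots> = 1 + p * (real d * S - S)"
        using assms(2) by (simp add: S_def)
      finally have Seq: "S * (1 - p * (real d - 1)) = 1" by (simp add: algebra_simps)
      have c_ge: "1 - p * (real d - 1) \<ge> 1/2" using pd p0 by (simp add: algebra_simps)
      have S_pos: "S > 0"
      proof (rule ccontr)
        assume "\<not> S > 0"
        then have "S * (1 - p * (real d - 1)) \<le> 0" using c_ge by (simp add: mult_nonpos_nonneg)
        then show False using Seq by simp
      qed
      have S_le: "S \<le> 2"
      proof -
        have "S * (1/2) \<le> S * (1 - p * (real d - 1))" using S_pos c_ge by (intro mult_left_mono) auto
        then show ?thesis using Seq by simp
      qed
      have one_in: "1 \<in> {1..d}" using assms(1) by simp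
      have nu1: "nu 1 * (1 + p) = p * S" using tr[OF one_in] assms(3) by (simp add: algebra_simps)
      have nu1_pos: "nu 1 > 0"
      proof (rule ccontr)
        assume "\<not> nu 1 > 0"
        then have "nu 1 * (1 + p) \<le> 0" using p0 by (simp add: mult_nonpos_nonneg)
        moreover have "p * S > 0" using p0 S_pos by simp
        ultimately show False using nu1 by simp
      qed
      have nu1_le: "nu 1 \<le> 2 * p"
      proof -
        have "nu 1 \<le> nu 1 * (1+p)" using nu1_pos p0 by simp
        also have "\<dots> \<le> 2 * p" using nu1 S_le p0 by simp
        finally show ?thesis .
      qed
      have nuj: "nu j * (1 + p) = lam j + p * S" if "j \<in> {2..d}" for j
        using tr[of j] that by (auto simp: algebra_simps)
      have nuj_ge1: "nu 1 \<le> nu j" if "j \<in> {2..d}" for j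
      proof -
        have "lam j > 0" using assms(4) that by blast
        then have "nu 1 * (1+p) \<le> nu j * (1+p)" using nu1 nuj[OF that] by linarith
        then show ?thesis using p0 by simp
      qed
      have nuj_ge: "nu j \<ge> m/2" if "j \<in> {2..d}" for j
      proof -
        have pos: "nu j > 0" using nuj_ge1[OF that] nu1_pos by simp
        have "p * S > 0" using p0 S_pos by simp
        then have "m \<le> nu j * (1+p)" using nuj[OF that] m_le[OF that] by linarith
        also have "\<dots> \<le> nu j * 2" using pos p8 by (intro mult_left_mono) auto
        finally show ?thesis by simp
      qed
      define s where "s i = sqrt (nu i)" for i
      have s1_pos: "s 1 > 0" unfolding s_def using nu1_pos by simp
      have s1_le: "s 1 \<le> 2 * q"
      proof -
        have "s 1 \<le> sqrt (4 * p)" unfolding s_def using nu1_le p0 by (intro real_sqrt_le_mono) simp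
        also have "\<dots> = 2 * q" unfolding q_def by (simp add: real_sqrt_mult)
        finally show ?thesis .
      qed
      have sj_ge: "s j \<ge> \<sigma>" if "j \<in> {2..d}" for j
        unfolding s_def \<sigma>_def using nuj_ge[OF that] by (intro real_sqrt_le_mono) simp
      have nu_sq: "nu i = (s i)^2" if "i \<in> {1..d}" for i
      proof (cases "i = 1")
        case True then show ?thesis using nu1_pos s_def by simp
      next
        case False then have "i \<in> {2..d}" using that by auto
        then have "nu i \<ge> 0" using nuj_ge1 nu1_pos by force
        then show ?thesis using s_def by simp
      qed
      have mu_sq: "mu i = (t + s i)^2" if "i \<in> {1..d}" for i
      proof -
        have "sqrt (mu i) - sqrt (nu i) = t" using H that by blast
        then have "sqrt (mu i) = t + s i" using s_def by simp
        moreover have "mu i > 0" using H that by blast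
        then have "mu i = (sqrt (mu i))^2" by simp
        ultimately show ?thesis by simp
      qed
      have rhs: "Min ((\<lambda>i. (sqrt (mu i) - sqrt (nu i))\<^sup>2) ` {1..d}) = t^2"
      proof -
        have "(\<lambda>i. (sqrt (mu i) - sqrt (nu i))\<^sup>2) ` {1..d} = {t^2}"
          using H one_in by force
        then show ?thesis by simp
      qed
      have claim: "objective d mu nu g \<le> t^2 - nu 1" if gG: "g \<in> Gamma_set d (routing_unif p)" for g
      proof (rule ccontr)
        assume "\<not> objective d mu nu g \<le> t^2 - nu 1"
        then have "objective d mu nu g > t^2 - nu 1" by simp
        then have fi: "g i * (mu i / (1 + g i) - nu i) > t^2 - nu 1" if "i \<in> {1..d}" for i
          unfolding objective_def using that one_in by (subst (asm) Min_gr_iff) auto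
        have g_nn: "g i \<ge> 0" if "i \<in> {1..d}" for i using gG that unfolding Gamma_set_def by auto
        have g1: "g 1 > (t - s 1)/(2 * s 1)"
          using low_bound[OF s1_pos t_pos g_nn[OF one_in]] fi[OF one_in] mu_sq[OF one_in] nu_sq[OF one_in]
          by simp
        have gj: "g j < 2 + 2*t/s j" if "j \<in> {2..d}" for j
        proof -
          have jin: "j \<in> {1..d}" using that by auto
          have "nu 1 \<le> (s j)^2" using nuj_ge1[OF that] nu_sq[OF jin] by simp
          moreover have "s j > 0" using sj_ge[OF that] sig_pos by simp
          ultimately show ?thesis
            using up_bound[of "s j" t "g j" "nu 1"] t_pos g_nn[OF jin] fi[OF jin] mu_sq[OF jin] nu_sq[OF jin]
            by simp
        qed
        define v where "v = (\<lambda>k::nat. if k \<in> {2,3,4} then 1 else (0::real))"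
        have "dotd d (gamma_vec d (routing_unif p) g 1) v
              < Max ((\<lambda>j. dotd d (gamma_vec d (routing_unif p) g j) v) ` {1..d})"
        proof -
          have "\<forall>i\<in>{1..d}. \<forall>v. (\<forall>k\<in>{1..d}. v k \<ge> 0) \<and> (\<exists>k\<in>{1..d}. v k \<noteq> 0) \<and> v i = 0 \<longrightarrow>
            dotd d (gamma_vec d (routing_unif p) g i) v < Max ((\<lambda>j. dotd d (gamma_vec d (routing_unif p) g j) v) ` {1..d})"
            using gG unfolding Gamma_set_def by blast
          moreover have "(\<forall>k\<in>{1..d}. v k \<ge> 0) \<and> (\<exists>k\<in>{1..d}. v k \<noteq> 0) \<and> v 1 = 0"
            unfolding v_def using assms(1) by (auto intro!: bexI[of _ 2])
          ultimately show ?thesis using one_in by blast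
        qed
        moreover obtain j where jin: "j \<in> {1..d}" and
          jmax: "Max ((\<lambda>j. dotd d (gamma_vec d (routing_unif p) g j) v) ` {1..d})
               = dotd d (gamma_vec d (routing_unif p) g j) v"
        proof -
          have "Max ((\<lambda>j. dotd d (gamma_vec d (routing_unif p) g j) v) ` {1..d})
               \<in> (\<lambda>j. dotd d (gamma_vec d (routing_unif p) g j) v) ` {1..d}"
            by (rule Max_in) (use one_in in auto)
          then show ?thesis using that by (metis (no_types, lifting) imageE)
        qed
        moreover have "dotd d (gamma_vec d (routing_unif p) g j) v \<le> dotd d (gamma_vec d (routing_unif p) g 1) v"
        proof (cases "j = 1")
          case True then show ?thesis by simp
        next
          case False
          then have j2: "j \<in> {2..d}" using jin by auto
          have d4': "d \<ge> 4" using assms(1) by simp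
          note dd = dotd_234[OF d4', folded v_def]
          define L where "L = ln (1 + p * g 1)"
          define X where "X = ln (1 + g j)"
          define Y where "Y = ln (1 + 2 * p * g j)"
          have g1nn: "g 1 \<ge> 0" using g_nn one_in by simp
          have gjnn: "g j \<ge> 0" using g_nn jin by simp
          have lowk: "gamma_vec d (routing_unif p) g 1 k \<ge> L" if "k \<in> {2,3,4}" for k
          proof -
            have "Qvisit d (routing_unif p) k 1 \<ge> p" using Q_off(3)[of p d k 1] p0 pd that one_in by auto
            then have "1 + p * g 1 \<le> 1 + Qvisit d (routing_unif p) k 1 * g 1" using g1nn
              by (simp add: mult_right_mono)
            moreover have "0 < 1 + p * g 1" using p0 g1nn by (simp add: add_pos_nonneg)
            ultimately show ?thesis unfolding L_def gamma_vec_def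
              by (subst ln_le_cancel_iff) auto
          qed
          have upk: "gamma_vec d (routing_unif p) g j k \<le> Y" if "k \<noteq> j" for k
          proof -
            have "Qvisit d (routing_unif p) k j \<le> 2 * p" "Qvisit d (routing_unif p) k j \<ge> 0"
              using Q_off(1,2)[of p d k j] p0 pd that by auto
            then have "1 + Qvisit d (routing_unif p) k j * g j \<le> 1 + 2 * p * g j"
              "1 + Qvisit d (routing_unif p) k j * g j > 0" using gjnn
              by (auto simp: mult_right_mono add_pos_nonneg)
            then show ?thesis unfolding Y_def gamma_vec_def by (subst ln_le_cancel_iff) auto
          qed
          have diag: "gamma_vec d (routing_unif p) g j j = X"
            unfolding X_def gamma_vec_def by (simp add: Q_diag)
          have YX: "Y \<le> X"
          proof -
            have "(2 * p) * g j \<le> 1 * g j" using p8 gjnn by (intro mult_right_mono) auto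
            moreover have "0 < 1 + 2 * p * g j" using p0 gjnn by (simp add: add_pos_nonneg)
            ultimately show ?thesis unfolding X_def Y_def by (subst ln_le_cancel_iff) auto
          qed
          have upper: "dotd d (gamma_vec d (routing_unif p) g j) v \<le> X + 2 * Y"
          proof -
            have a: "gamma_vec d (routing_unif p) g j k \<le> (if j = k then X else Y)" for k
              using upk[of k] diag by (cases "j = k") auto
            show ?thesis unfolding dd using a[of 2] a[of 3] a[of 4] YX
              by (cases "j = 2"; cases "j = 3"; cases "j = 4"; simp; linarith)
          qed
          have lower: "3 * L \<le> dotd d (gamma_vec d (routing_unif p) g 1) v"
            using dd lowk[of 2] lowk[of 3] lowk[of 4] by simp
          have sj: "s j \<ge> \<sigma>" using sj_ge[OF j2] .
          have A: "q * t / 4 \<le> 1 + p * g 1"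
          proof -
            have "p * ((t - s 1)/(2 * s 1)) \<le> p * g 1" using g1 p0 by (intro mult_left_mono) auto
            moreover have "p * ((t - s 1)/(2 * s 1)) = p * t / (2 * s 1) - p / 2"
              using s1_pos by (simp add: field_simps)
            moreover have "p * t / (4 * q) \<le> p * t / (2 * s 1)"
              using s1_le s1_pos p0 t_pos by (intro divide_left_mono) auto
            moreover have "p * t / (4 * q) = q * t / 4" using pq q_pos by (simp add: power2_eq_square)
            ultimately show ?thesis using p8 by linarith
          qed
          have B: "1 + g j \<le> W * t"
          proof -
            have "2 * t / s j \<le> 2 * t / \<sigma>" using sj sig_pos t_pos by (intro divide_left_mono) auto
            moreover have "3 \<le> 3 * t" using t1 by simp
            moreover have "2 * t / \<sigma> = (2/\<sigma>) * t" by simp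
            ultimately show ?thesis using gj[OF j2] unfolding W_def by (simp add: algebra_simps)
          qed
          have C: "1 + 2 * p * g j \<le> 8 * p * t / \<sigma>"
          proof -
            have "2 * p * g j \<le> 2 * p * (2 + 2 * t / s j)" using gj[OF j2] p0 by simp
            moreover have "4 * p * t / s j \<le> 4 * p * t / \<sigma>" using sj sig_pos t_pos p0 by (intro divide_left_mono) auto
            moreover have "2 * p * (2 + 2 * t / s j) = 4 * p + 4 * p * t / s j" by (simp add: algebra_simps)
            moreover have "2 \<le> 4 * p * t / \<sigma>" using tsig sig_pos by (simp add: field_simps)
            moreover have "8 * p * t / \<sigma> = 2 * (4 * p * t / \<sigma>)" by simp
            ultimately show ?thesis using p8 by linarith
          qed
          have BC: "(W * t) * (8 * p * t / \<sigma>)^2 \<le> (q * t / 4)^3"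
          proof -
            have "4096 * W * q \<le> \<sigma>^2" using qK W_pos unfolding K_def by (simp add: field_simps)
            then have "(q^3 * t^3) * (4096 * W * q) \<le> (q^3 * t^3) * \<sigma>^2"
              using q_pos t_pos by (intro mult_left_mono) auto
            then show ?thesis using sig_pos unfolding pq
              by (simp add: field_simps power2_eq_square power3_eq_cube)
          qed
          have "X + 2 * Y \<le> 3 * L" unfolding X_def Y_def L_def
            by (rule key_ln[OF _ B _ C A _ BC]) (use gjnn p0 q_pos t_pos in auto)
          then show ?thesis using upper lower by linarith
        qed
        ultimately show False by linarith
      qed
      have "(SUP g\<in>Gamma_set d (routing_unif p). ereal (objective d mu nu g)) \<le> ereal (t^2 - nu 1)"
        by (rule SUP_least) (use claim in auto)
      moreover have "ereal (t^2 - nu 1) < ereal (t^2)" using nu1_pos by simp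
      ultimately show "(SUP g\<in>Gamma_set d (routing_unif p). ereal (objective d mu nu g))
                \<noteq> ereal (Min ((\<lambda>i. (sqrt (mu i) - sqrt (nu i))\<^sup>2) ` {1..d}))"
        unfolding rhs by auto
    qed
  qed
qed

end
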